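(* Let $p(x_1,\dots,x_n)\in S_n(\emptyset)$ be a type of $\mathrm{Th}(M_{[0,1]})$. Then $p$ is implied by $\bigcup_{i<j}p{\upharpoonright}_{x_ix_j}$, where $p{\upharpoonright}_{x_ix_j}$ is the restriction of $p$ to the variables $x_i,x_j$. More generally, if $(a_1,\dots,a_n)\in[0,1]^n$ is such that $(a_i,a_j)\in\mathrm{im}(p{\upharpoonright}_{x_ix_j})$ for each $i<j$, then $(a_1,\dots,a_n)\in\mathrm{im}(p)$.
   Context: $M_{[0,1]}$ is the set of continuous nondecreasing functions $f:[0,1]\to[0,1]$ with $f(0)=0$, $f(1)=1$, with the sup metric, regarded as a metric structure in the language of binary predicates $\varphi_\alpha$ ($\alpha\in\mathbb{Q}\cap[0,1]$), where $\varphi_\alpha(f,g)=f(t)$ for any $t$ with $f(t)+g(t)=\alpha$. Every type $q\in S_m(\emptyset)$ is realized in $M_{[0,1]}$, and all realizations $(g_1,\dots,g_m)$ have the same image $\{(g_1(t),\dots,g_m(t)):t\in[0,1]\}$; this is denoted $\mathrm{im}(q)$. *)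

theory Defs
  imports Complex_Main
begin

definition M01 :: "(real \<Rightarrow> real) set" where
  "M01 = {f. continuous_on {0..1} f \<and> mono_on {0..1} f \<and> f ` {0..1} \<subseteq> {0..1}
            \<and> f 0 = 0 \<and> f 1 = 1}"

definition supdist :: "(real \<Rightarrow> real) \<Rightarrow> (real \<Rightarrow> real) \<Rightarrow> real" where
  "supdist f g = (SUP t\<in>{0..1}. \<bar>f t - g t\<bar>)"

definition phi :: "real \<Rightarrow> (real \<Rightarrow> real) \<Rightarrow> (real \<Rightarrow> real) \<Rightarrow> real" where
  "phi \<alpha> f g = f (SOME t. t \<in> {0..1} \<and> f t + g t = \<alpha>)"

datatype form =
    Dist nat nat
  | Phi rat nat nat
  | Zero
  | One
  | Neg form
  | Half form
  | Dotminus form form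
  | Sup nat form
  | Inf nat form

fun wf_form :: "form \<Rightarrow> bool" where
  "wf_form (Dist x y) = True"
| "wf_form (Phi a x y) = (0 \<le> a \<and> a \<le> 1)"
| "wf_form Zero = True"
| "wf_form One = True"
| "wf_form (Neg p) = wf_form p"
| "wf_form (Half p) = wf_form p"
| "wf_form (Dotminus p q) = (wf_form p \<and> wf_form q)"
| "wf_form (Sup x p) = wf_form p"
| "wf_form (Inf x p) = wf_form p"

fun fv :: "form \<Rightarrow> nat set" where
  "fv (Dist x y) = {x, y}"
| "fv (Phi a x y) = {x, y}"
| "fv Zero = {}"
| "fv One = {}"
| "fv (Neg p) = fv p"
| "fv (Half p) = fv p"
| "fv (Dotminus p q) = fv p \<union> fv q"
| "fv (Sup x p) = fv p - {x}"
| "fv (Inf x p) = fv p - {x}"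

fun eval :: "(nat \<Rightarrow> real \<Rightarrow> real) \<Rightarrow> form \<Rightarrow> real" where
  "eval \<sigma> (Dist x y) = supdist (\<sigma> x) (\<sigma> y)"
| "eval \<sigma> (Phi a x y) = phi (of_rat a) (\<sigma> x) (\<sigma> y)"
| "eval \<sigma> Zero = 0"
| "eval \<sigma> One = 1"
| "eval \<sigma> (Neg p) = 1 - eval \<sigma> p"
| "eval \<sigma> (Half p) = eval \<sigma> p / 2"
| "eval \<sigma> (Dotminus p q) = max 0 (eval \<sigma> p - eval \<sigma> q)"
| "eval \<sigma> (Sup x p) = (SUP f\<in>M01. eval (\<sigma>(x := f)) p)"
| "eval \<sigma> (Inf x p) = (INF f\<in>M01. eval (\<sigma>(x := f)) p)"

text \<open>An n-tuple (g_0,...,g_{n-1}) of M_[0,1] (indices >= n irrelevant).\<close>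
definition tuple :: "nat \<Rightarrow> (nat \<Rightarrow> real \<Rightarrow> real) \<Rightarrow> bool" where
  "tuple n g \<longleftrightarrow> (\<forall>i<n. g i \<in> M01)"

text \<open>Two tuples have the same type in the variables V (i.e. the same restriction
  of their types to the variables in V).\<close>
definition same_type_on :: "nat set \<Rightarrow> (nat \<Rightarrow> real \<Rightarrow> real) \<Rightarrow> (nat \<Rightarrow> real \<Rightarrow> real) \<Rightarrow> bool" where
  "same_type_on V g h \<longleftrightarrow> (\<forall>\<phi>. wf_form \<phi> \<and> fv \<phi> \<subseteq> V \<longrightarrow> eval g \<phi> = eval h \<phi>)"

definition tuple_image :: "nat set \<Rightarrow> (nat \<Rightarrow> real \<Rightarrow> real) \<Rightarrow> (nat \<Rightarrow> real) set" where
  "tuple_image I g = {a. \<exists>t\<in>{0..1}. \<forall>i\<in>I. a i = g i t}"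

end

theory Submission
  imports Defs "HOL-Analysis.Analysis"
begin

abbreviation I01 :: "real set" where "I01 \<equiv> {0..1}"

lemma M01I:
  assumes "continuous_on {0..1} f" "\<And>s t. 0 \<le> s \<Longrightarrow> s \<le> t \<Longrightarrow> t \<le> 1 \<Longrightarrow> f s \<le> f t"
    "\<And>t. 0 \<le> t \<Longrightarrow> t \<le> 1 \<Longrightarrow> 0 \<le> f t \<and> f t \<le> 1" "f 0 = 0" "f 1 = 1"
  shows "f \<in> M01"
  using assms unfolding M01_def mono_on_def by auto

lemma M01_cont: "f \<in> M01 \<Longrightarrow> continuous_on {0..1} f"
  by (simp add: M01_def)

lemma M01_mono: "f \<in> M01 \<Longrightarrow> 0 \<le> s \<Longrightarrow> s \<le> t \<Longrightarrow> t \<le> 1 \<Longrightarrow> f s \<le> f t"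
  unfolding M01_def mono_on_def by auto

lemma M01_range: "f \<in> M01 \<Longrightarrow> 0 \<le> t \<Longrightarrow> t \<le> 1 \<Longrightarrow> 0 \<le> f t \<and> f t \<le> 1"
  unfolding M01_def image_subset_iff by auto

lemma M01_0: "f \<in> M01 \<Longrightarrow> f 0 = 0" and M01_1: "f \<in> M01 \<Longrightarrow> f 1 = 1"
  unfolding M01_def by auto

lemma id_M01: "(\<lambda>t. t) \<in> M01"
  by (rule M01I) (auto intro: continuous_intros)

lemma M01_ne: "M01 \<noteq> {}" using id_M01 by blast

lemma M01_attains:
  assumes "f \<in> M01" "0 \<le> a" "a \<le> 1"
  shows "\<exists>t\<in>{0..1}. f t = a"
  using IVT'[of f 0 a 1] assms M01_0[OF assms(1)] M01_1[OF assms(1)] M01_cont[OF assms(1)] by auto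

lemma ex_level:
  assumes "f \<in> M01" "g \<in> M01" "0 \<le> \<alpha>" "\<alpha> \<le> 2"
  shows "\<exists>t\<in>{0..1}. f t + g t = \<alpha>"
proof -
  have c: "continuous_on {0..1} (\<lambda>t. f t + g t)"
    using M01_cont[OF assms(1)] M01_cont[OF assms(2)] by (intro continuous_intros)
  show ?thesis
    using IVT'[of "\<lambda>t. f t + g t" 0 \<alpha> 1, OF _ _ _ c] assms M01_0[OF assms(1)] M01_1[OF assms(1)]
      M01_0[OF assms(2)] M01_1[OF assms(2)] by auto
qed

lemma level_unique:
  assumes "f \<in> M01" "g \<in> M01" "s \<in> {0..1}" "t \<in> {0..1}" "f s + g s = f t + g t"
  shows "f s = f t"
proof (cases "s \<le> t")
  case True
  then have "f s \<le> f t" "g s \<le> g t" using assms M01_mono by auto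
  then show ?thesis using assms(5) by linarith
next
  case False
  then have "f t \<le> f s" "g t \<le> g s" using assms M01_mono by auto
  then show ?thesis using assms(5) by linarith
qed

lemma phi_eq:
  assumes "f \<in> M01" "g \<in> M01" "t \<in> {0..1}" "f t + g t = \<alpha>"
  shows "phi \<alpha> f g = f t"
proof -
  have ex: "\<exists>t. t \<in> {0..1} \<and> f t + g t = \<alpha>" using assms by blast
  define s where "s = (SOME t. t \<in> {0..1} \<and> f t + g t = \<alpha>)"
  have s: "s \<in> {0..1} \<and> f s + g s = \<alpha>" unfolding s_def by (rule someI_ex[OF ex])
  have "f s = f t" using level_unique[OF assms(1,2)] s assms by auto
  then show ?thesis unfolding phi_def s_def[symmetric] by simp
qed

lemma supdist_ge:
  assumes "f \<in> M01" "g \<in> M01" "t \<in> {0..1}"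
  shows "\<bar>f t - g t\<bar> \<le> supdist f g"
  unfolding supdist_def
proof (rule cSUP_upper[OF assms(3)])
  show "bdd_above ((\<lambda>t. \<bar>f t - g t\<bar>) ` {0..1})"
    using M01_range[OF assms(1)] M01_range[OF assms(2)]
    by (intro bdd_aboveI[of _ 1]) fastforce
qed

lemma supdist_le:
  assumes "\<And>t. t \<in> {0..1} \<Longrightarrow> \<bar>f t - g t\<bar> \<le> c"
  shows "supdist f g \<le> c"
  unfolding supdist_def by (rule cSUP_least) (use assms in auto)

lemma supdist_bounds:
  assumes "f \<in> M01" "g \<in> M01"
  shows "0 \<le> supdist f g \<and> supdist f g \<le> 1"
proof
  show "0 \<le> supdist f g" using supdist_ge[OF assms, of 0] by simp
  show "supdist f g \<le> 1"
    by (rule supdist_le) (use M01_range[OF assms(1)] M01_range[OF assms(2)] in fastforce)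
qed

lemma eval_local:
  "(\<And>i. i \<in> fv \<phi> \<Longrightarrow> \<sigma> i = \<tau> i) \<Longrightarrow> eval \<sigma> \<phi> = eval \<tau> \<phi>"
proof (induction \<phi> arbitrary: \<sigma> \<tau>)
  case (Dist x y)
  have "\<sigma> x = \<tau> x" "\<sigma> y = \<tau> y" using Dist.prems by auto
  then show ?case by (simp only: eval.simps)
next
  case (Phi a x y)
  have "\<sigma> x = \<tau> x" "\<sigma> y = \<tau> y" using Phi.prems by auto
  then show ?case by (simp only: eval.simps)
next
  case Zero then show ?case by (simp only: eval.simps)
next
  case One then show ?case by (simp only: eval.simps)
next
  case (Neg p)
  have "eval \<sigma> p = eval \<tau> p" by (rule Neg.IH) (use Neg.prems in simp)
  then show ?case by (simp only: eval.simps)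
next
  case (Half p)
  have "eval \<sigma> p = eval \<tau> p" by (rule Half.IH) (use Half.prems in simp)
  then show ?case by (simp only: eval.simps)
next
  case (Dotminus p q)
  have "eval \<sigma> p = eval \<tau> p" by (rule Dotminus.IH(1)) (use Dotminus.prems in simp)
  moreover have "eval \<sigma> q = eval \<tau> q" by (rule Dotminus.IH(2)) (use Dotminus.prems in simp)
  ultimately show ?case by (simp only: eval.simps)
next
  case (Sup x p)
  have "\<And>f. eval (\<sigma>(x := f)) p = eval (\<tau>(x := f)) p"
    by (rule Sup.IH) (use Sup.prems in auto)
  then show ?case by (simp only: eval.simps)
next
  case (Inf x p)
  have "\<And>f. eval (\<sigma>(x := f)) p = eval (\<tau>(x := f)) p"
    by (rule Inf.IH) (use Inf.prems in auto)
  then show ?case by (simp only: eval.simps)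
qed

lemma rat01: "0 \<le> a \<Longrightarrow> a \<le> 1 \<Longrightarrow> 0 \<le> real_of_rat a \<and> real_of_rat a \<le> 1"
  by (metis of_rat_0 of_rat_1 of_rat_less_eq)

lemma eval_bounds:
  "wf_form \<phi> \<Longrightarrow> (\<And>i. i \<in> fv \<phi> \<Longrightarrow> \<sigma> i \<in> M01) \<Longrightarrow> 0 \<le> eval \<sigma> \<phi> \<and> eval \<sigma> \<phi> \<le> 1"
proof (induction \<phi> arbitrary: \<sigma>)
  case (Dist x y)
  have "\<sigma> x \<in> M01" "\<sigma> y \<in> M01" using Dist.prems by auto
  then show ?case using supdist_bounds by (simp only: eval.simps)
next
  case (Phi a x y)
  have w: "0 \<le> a \<and> a \<le> 1" using Phi.prems(1) by simp
  have a: "0 \<le> real_of_rat a" "real_of_rat a \<le> 2" using rat01[of a] w by linarith+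
  have m: "\<sigma> x \<in> M01" "\<sigma> y \<in> M01" using Phi.prems by auto
  obtain t where t: "t \<in> {0..1}" "\<sigma> x t + \<sigma> y t = real_of_rat a"
    using ex_level[OF m a] by blast
  have "eval \<sigma> (Phi a x y) = \<sigma> x t" using phi_eq[OF m t] by (simp only: eval.simps)
  then show ?case using M01_range[OF m(1)] t by simp
next
  case Zero then show ?case by (simp only: eval.simps) simp
next
  case One then show ?case by (simp only: eval.simps) simp
next
  case (Neg p)
  have "0 \<le> eval \<sigma> p \<and> eval \<sigma> p \<le> 1" by (rule Neg.IH) (use Neg.prems in simp_all)
  then show ?case by (simp only: eval.simps) simp
next
  case (Half p)
  have "0 \<le> eval \<sigma> p \<and> eval \<sigma> p \<le> 1" by (rule Half.IH) (use Half.prems in simp_all)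
  then show ?case by (simp only: eval.simps) simp
next
  case (Dotminus p q)
  have "0 \<le> eval \<sigma> p \<and> eval \<sigma> p \<le> 1" by (rule Dotminus.IH(1)) (use Dotminus.prems in simp_all)
  moreover have "0 \<le> eval \<sigma> q \<and> eval \<sigma> q \<le> 1" by (rule Dotminus.IH(2)) (use Dotminus.prems in simp_all)
  ultimately show ?case by (simp only: eval.simps) simp
next
  case (Sup x p)
  have b: "\<And>f. f \<in> M01 \<Longrightarrow> 0 \<le> eval (\<sigma>(x := f)) p \<and> eval (\<sigma>(x := f)) p \<le> 1"
    by (rule Sup.IH) (use Sup.prems in auto)
  have "0 \<le> eval (\<sigma>(x := (\<lambda>t. t))) p" using b id_M01 by blast
  also have "\<dots> \<le> (SUP f\<in>M01. eval (\<sigma>(x := f)) p)"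
    by (rule cSUP_upper[OF id_M01]) (use b in \<open>auto intro: bdd_aboveI[of _ 1]\<close>)
  finally have "0 \<le> (SUP f\<in>M01. eval (\<sigma>(x := f)) p)" .
  moreover have "(SUP f\<in>M01. eval (\<sigma>(x := f)) p) \<le> 1"
    using b by (auto intro!: cSUP_least M01_ne)
  ultimately show ?case by (simp only: eval.simps)
next
  case (Inf x p)
  have b: "\<And>f. f \<in> M01 \<Longrightarrow> 0 \<le> eval (\<sigma>(x := f)) p \<and> eval (\<sigma>(x := f)) p \<le> 1"
    by (rule Inf.IH) (use Inf.prems in auto)
  have "(INF f\<in>M01. eval (\<sigma>(x := f)) p) \<le> eval (\<sigma>(x := (\<lambda>t. t))) p"
    by (rule cINF_lower[OF _ id_M01]) (use b in \<open>auto intro: bdd_belowI[of _ 0]\<close>)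
  also have "\<dots> \<le> 1" using b id_M01 by blast
  finally have "(INF f\<in>M01. eval (\<sigma>(x := f)) p) \<le> 1" .
  moreover have "0 \<le> (INF f\<in>M01. eval (\<sigma>(x := f)) p)"
    using b by (auto intro!: cINF_greatest M01_ne)
  ultimately show ?case by (simp only: eval.simps)
qed

lemma SUP_diff_le:
  fixes A B :: "'a \<Rightarrow> real"
  assumes "S \<noteq> {}" "\<And>f. f \<in> S \<Longrightarrow> \<bar>A f - B f\<bar> \<le> c"
    "\<And>f. f \<in> S \<Longrightarrow> 0 \<le> A f \<and> A f \<le> 1" "\<And>f. f \<in> S \<Longrightarrow> 0 \<le> B f \<and> B f \<le> 1"
  shows "\<bar>(SUP f\<in>S. A f) - (SUP f\<in>S. B f)\<bar> \<le> c"
proof -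
  have bA: "bdd_above (A ` S)" using assms(3) by (intro bdd_aboveI[of _ 1]) auto
  have bB: "bdd_above (B ` S)" using assms(4) by (intro bdd_aboveI[of _ 1]) auto
  have 1: "(SUP f\<in>S. A f) \<le> (SUP f\<in>S. B f) + c"
  proof (rule cSUP_least[OF assms(1)])
    fix f assume f: "f \<in> S"
    have "A f \<le> B f + c" using assms(2)[OF f] by linarith
    also have "B f \<le> (SUP f\<in>S. B f)" by (rule cSUP_upper[OF f bB])
    finally show "A f \<le> (SUP f\<in>S. B f) + c" by linarith
  qed
  have 2: "(SUP f\<in>S. B f) \<le> (SUP f\<in>S. A f) + c"
  proof (rule cSUP_least[OF assms(1)])
    fix f assume f: "f \<in> S"
    have "B f \<le> A f + c" using assms(2)[OF f] by linarith
    also have "A f \<le> (SUP f\<in>S. A f)" by (rule cSUP_upper[OF f bA])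
    finally show "B f \<le> (SUP f\<in>S. A f) + c" by linarith
  qed
  show ?thesis using 1 2 by linarith
qed

lemma INF_diff_le:
  fixes A B :: "'a \<Rightarrow> real"
  assumes "S \<noteq> {}" "\<And>f. f \<in> S \<Longrightarrow> \<bar>A f - B f\<bar> \<le> c"
    "\<And>f. f \<in> S \<Longrightarrow> 0 \<le> A f \<and> A f \<le> 1" "\<And>f. f \<in> S \<Longrightarrow> 0 \<le> B f \<and> B f \<le> 1"
  shows "\<bar>(INF f\<in>S. A f) - (INF f\<in>S. B f)\<bar> \<le> c"
proof -
  have bA: "bdd_below (A ` S)" using assms(3) by (intro bdd_belowI[of _ 0]) auto
  have bB: "bdd_below (B ` S)" using assms(4) by (intro bdd_belowI[of _ 0]) auto
  have 1: "(INF f\<in>S. B f) - c \<le> (INF f\<in>S. A f)"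
  proof (rule cINF_greatest[OF assms(1)])
    fix f assume f: "f \<in> S"
    have "(INF f\<in>S. B f) \<le> B f" by (rule cINF_lower[OF bB f])
    then show "(INF f\<in>S. B f) - c \<le> A f" using assms(2)[OF f] by linarith
  qed
  have 2: "(INF f\<in>S. A f) - c \<le> (INF f\<in>S. B f)"
  proof (rule cINF_greatest[OF assms(1)])
    fix f assume f: "f \<in> S"
    have "(INF f\<in>S. A f) \<le> A f" by (rule cINF_lower[OF bA f])
    then show "(INF f\<in>S. A f) - c \<le> B f" using assms(2)[OF f] by linarith
  qed
  show ?thesis using 1 2 by linarith
qed

lemma phi_lip:
  assumes m: "f \<in> M01" "g \<in> M01" "f' \<in> M01" "g' \<in> M01" and a: "0 \<le> \<alpha>" "\<alpha> \<le> 2"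
    and df: "\<And>t. t \<in> {0..1} \<Longrightarrow> \<bar>f t - f' t\<bar> \<le> \<delta>"
    and dg: "\<And>t. t \<in> {0..1} \<Longrightarrow> \<bar>g t - g' t\<bar> \<le> \<delta>"
  shows "\<bar>phi \<alpha> f g - phi \<alpha> f' g'\<bar> \<le> 3 * \<delta>"
proof -
  obtain t where t: "t \<in> {0..1}" "f t + g t = \<alpha>" using ex_level[OF m(1,2) a] by blast
  obtain t' where t': "t' \<in> {0..1}" "f' t' + g' t' = \<alpha>" using ex_level[OF m(3,4) a] by blast
  have p1: "phi \<alpha> f g = f t" by (rule phi_eq[OF m(1,2) t])
  have p2: "phi \<alpha> f' g' = f' t'" by (rule phi_eq[OF m(3,4) t'])
  have e1: "\<bar>f t' - f' t'\<bar> \<le> \<delta>" "\<bar>g t' - g' t'\<bar> \<le> \<delta>" using df dg t' by auto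
  have "\<bar>f t' - f t\<bar> \<le> 2 * \<delta>"
  proof (cases "t \<le> t'")
    case True
    then have "f t \<le> f t'" "g t \<le> g t'" using M01_mono m t t' by auto
    then show ?thesis using e1 t t' by linarith
  next
    case False
    then have "f t' \<le> f t" "g t' \<le> g t" using M01_mono m t t' by auto
    then show ?thesis using e1 t t' by linarith
  qed
  then show ?thesis unfolding p1 p2 using e1 by linarith
qed

lemma supdist_lip:
  assumes m: "f \<in> M01" "g \<in> M01" "f' \<in> M01" "g' \<in> M01"
    and df: "\<And>t. t \<in> {0..1} \<Longrightarrow> \<bar>f t - f' t\<bar> \<le> \<delta>"
    and dg: "\<And>t. t \<in> {0..1} \<Longrightarrow> \<bar>g t - g' t\<bar> \<le> \<delta>"
  shows "\<bar>supdist f g - supdist f' g'\<bar> \<le> 2 * \<delta>"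
proof -
  have 1: "supdist f g \<le> supdist f' g' + 2 * \<delta>"
  proof (rule supdist_le)
    fix t :: real assume t: "t \<in> {0..1}"
    have "\<bar>f' t - g' t\<bar> \<le> supdist f' g'" by (rule supdist_ge[OF m(3,4) t])
    then show "\<bar>f t - g t\<bar> \<le> supdist f' g' + 2 * \<delta>" using df[OF t] dg[OF t] by linarith
  qed
  have 2: "supdist f' g' \<le> supdist f g + 2 * \<delta>"
  proof (rule supdist_le)
    fix t :: real assume t: "t \<in> {0..1}"
    have "\<bar>f t - g t\<bar> \<le> supdist f g" by (rule supdist_ge[OF m(1,2) t])
    then show "\<bar>f' t - g' t\<bar> \<le> supdist f g + 2 * \<delta>" using df[OF t] dg[OF t] by linarith
  qed
  show ?thesis using 1 2 by linarith
qed

definition close :: "nat set \<Rightarrow> real \<Rightarrow> (nat \<Rightarrow> real \<Rightarrow> real) \<Rightarrow> (nat \<Rightarrow> real \<Rightarrow> real) \<Rightarrow> bool" where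
  "close V \<delta> \<sigma> \<tau> \<longleftrightarrow> (\<forall>i\<in>V. \<sigma> i \<in> M01 \<and> \<tau> i \<in> M01 \<and> (\<forall>t\<in>{0..1}. \<bar>\<sigma> i t - \<tau> i t\<bar> \<le> \<delta>))"

lemma eval_lip:
  "wf_form \<phi> \<Longrightarrow> \<exists>L\<ge>0. \<forall>\<sigma> \<tau> \<delta>. 0 \<le> \<delta> \<longrightarrow> close (fv \<phi>) \<delta> \<sigma> \<tau> \<longrightarrow>
      \<bar>eval \<sigma> \<phi> - eval \<tau> \<phi>\<bar> \<le> L * \<delta>"
proof (induction \<phi>)
  case (Dist x y)
  show ?case
  proof (intro exI[of _ 2] conjI allI impI)
    fix \<sigma> \<tau> :: "nat \<Rightarrow> real \<Rightarrow> real" and \<delta> :: real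
    assume "close (fv (Dist x y)) \<delta> \<sigma> \<tau>"
    then have h: "\<sigma> x \<in> M01" "\<sigma> y \<in> M01" "\<tau> x \<in> M01" "\<tau> y \<in> M01"
      "\<And>t. t \<in> {0..1} \<Longrightarrow> \<bar>\<sigma> x t - \<tau> x t\<bar> \<le> \<delta>" "\<And>t. t \<in> {0..1} \<Longrightarrow> \<bar>\<sigma> y t - \<tau> y t\<bar> \<le> \<delta>"
      unfolding close_def by auto
    show "\<bar>eval \<sigma> (Dist x y) - eval \<tau> (Dist x y)\<bar> \<le> 2 * \<delta>"
      using supdist_lip[OF h] by (simp only: eval.simps)
  qed simp
next
  case (Phi a x y)
  have w: "0 \<le> a \<and> a \<le> 1" using Phi.prems(1) by simp
  have a: "0 \<le> real_of_rat a" "real_of_rat a \<le> 2" using rat01[of a] w by linarith+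
  show ?case
  proof (intro exI[of _ 3] conjI allI impI)
    fix \<sigma> \<tau> :: "nat \<Rightarrow> real \<Rightarrow> real" and \<delta> :: real
    assume "close (fv (Phi a x y)) \<delta> \<sigma> \<tau>"
    then have h: "\<sigma> x \<in> M01" "\<sigma> y \<in> M01" "\<tau> x \<in> M01" "\<tau> y \<in> M01"
      "\<And>t. t \<in> {0..1} \<Longrightarrow> \<bar>\<sigma> x t - \<tau> x t\<bar> \<le> \<delta>" "\<And>t. t \<in> {0..1} \<Longrightarrow> \<bar>\<sigma> y t - \<tau> y t\<bar> \<le> \<delta>"
      unfolding close_def by auto
    show "\<bar>eval \<sigma> (Phi a x y) - eval \<tau> (Phi a x y)\<bar> \<le> 3 * \<delta>"
      using phi_lip[OF h(1-4) a h(5,6)] by (simp only: eval.simps)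
  qed simp
next
  case Zero
  show ?case by (intro exI[of _ 0]) (simp only: eval.simps, simp)
next
  case One
  show ?case by (intro exI[of _ 0]) (simp only: eval.simps, simp)
next
  case (Neg p)
  obtain L where L: "L \<ge> 0" "\<And>\<sigma> \<tau> \<delta>. 0 \<le> \<delta> \<Longrightarrow> close (fv p) \<delta> \<sigma> \<tau> \<Longrightarrow>
      \<bar>eval \<sigma> p - eval \<tau> p\<bar> \<le> L * \<delta>" using Neg.IH Neg.prems by auto
  show ?case
  proof (intro exI[of _ L] conjI allI impI)
    fix \<sigma> \<tau> :: "nat \<Rightarrow> real \<Rightarrow> real" and \<delta> :: real
    assume "0 \<le> \<delta>" "close (fv (Neg p)) \<delta> \<sigma> \<tau>"
    then have "\<bar>eval \<sigma> p - eval \<tau> p\<bar> \<le> L * \<delta>" using L by simp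
    then show "\<bar>eval \<sigma> (Neg p) - eval \<tau> (Neg p)\<bar> \<le> L * \<delta>" by (simp only: eval.simps)
  qed (rule L(1))
next
  case (Half p)
  obtain L where L: "L \<ge> 0" "\<And>\<sigma> \<tau> \<delta>. 0 \<le> \<delta> \<Longrightarrow> close (fv p) \<delta> \<sigma> \<tau> \<Longrightarrow>
      \<bar>eval \<sigma> p - eval \<tau> p\<bar> \<le> L * \<delta>" using Half.IH Half.prems by auto
  show ?case
  proof (intro exI[of _ L] conjI allI impI)
    fix \<sigma> \<tau> :: "nat \<Rightarrow> real \<Rightarrow> real" and \<delta> :: real
    assume "0 \<le> \<delta>" "close (fv (Half p)) \<delta> \<sigma> \<tau>"
    then have "\<bar>eval \<sigma> p - eval \<tau> p\<bar> \<le> L * \<delta>" using L by simp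
    moreover have "0 \<le> L * \<delta>" using L(1) \<open>0 \<le> \<delta>\<close> by simp
    ultimately show "\<bar>eval \<sigma> (Half p) - eval \<tau> (Half p)\<bar> \<le> L * \<delta>" by (simp only: eval.simps)
  qed (rule L(1))
next
  case (Dotminus p q)
  obtain L where L: "L \<ge> 0" "\<And>\<sigma> \<tau> \<delta>. 0 \<le> \<delta> \<Longrightarrow> close (fv p) \<delta> \<sigma> \<tau> \<Longrightarrow>
      \<bar>eval \<sigma> p - eval \<tau> p\<bar> \<le> L * \<delta>" using Dotminus.IH Dotminus.prems by auto
  obtain K where K: "K \<ge> 0" "\<And>\<sigma> \<tau> \<delta>. 0 \<le> \<delta> \<Longrightarrow> close (fv q) \<delta> \<sigma> \<tau> \<Longrightarrow>
      \<bar>eval \<sigma> q - eval \<tau> q\<bar> \<le> K * \<delta>" using Dotminus.IH Dotminus.prems by auto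
  show ?case
  proof (intro exI[of _ "L + K"] conjI allI impI)
    fix \<sigma> \<tau> :: "nat \<Rightarrow> real \<Rightarrow> real" and \<delta> :: real
    assume d: "0 \<le> \<delta>" "close (fv (Dotminus p q)) \<delta> \<sigma> \<tau>"
    then have "close (fv p) \<delta> \<sigma> \<tau>" "close (fv q) \<delta> \<sigma> \<tau>" unfolding close_def by auto
    then have "\<bar>eval \<sigma> p - eval \<tau> p\<bar> \<le> L * \<delta>" "\<bar>eval \<sigma> q - eval \<tau> q\<bar> \<le> K * \<delta>"
      using L K d by auto
    then show "\<bar>eval \<sigma> (Dotminus p q) - eval \<tau> (Dotminus p q)\<bar> \<le> (L + K) * \<delta>"
      by (simp only: eval.simps) (simp add: distrib_right)
  qed (use L K in simp)
next
  case (Sup x p)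
  obtain L where L: "L \<ge> 0" "\<And>\<sigma> \<tau> \<delta>. 0 \<le> \<delta> \<Longrightarrow> close (fv p) \<delta> \<sigma> \<tau> \<Longrightarrow>
      \<bar>eval \<sigma> p - eval \<tau> p\<bar> \<le> L * \<delta>" using Sup.IH Sup.prems by auto
  have wp: "wf_form p" using Sup.prems by simp
  show ?case
  proof (intro exI[of _ L] conjI allI impI)
    fix \<sigma> \<tau> :: "nat \<Rightarrow> real \<Rightarrow> real" and \<delta> :: real
    assume d: "0 \<le> \<delta>" "close (fv (Sup x p)) \<delta> \<sigma> \<tau>"
    have c: "close (fv p) \<delta> (\<sigma>(x := f)) (\<tau>(x := f))" if "f \<in> M01" for f
      using d that unfolding close_def by auto
    have "\<bar>(SUP f\<in>M01. eval (\<sigma>(x := f)) p) - (SUP f\<in>M01. eval (\<tau>(x := f)) p)\<bar> \<le> L * \<delta>"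
    proof (rule SUP_diff_le[OF M01_ne])
      fix f assume f: "f \<in> M01"
      show "\<bar>eval (\<sigma>(x := f)) p - eval (\<tau>(x := f)) p\<bar> \<le> L * \<delta>" by (rule L(2)[OF d(1) c[OF f]])
      show "0 \<le> eval (\<sigma>(x := f)) p \<and> eval (\<sigma>(x := f)) p \<le> 1"
        by (rule eval_bounds[OF wp]) (use c[OF f] in \<open>auto simp: close_def\<close>)
      show "0 \<le> eval (\<tau>(x := f)) p \<and> eval (\<tau>(x := f)) p \<le> 1"
        by (rule eval_bounds[OF wp]) (use c[OF f] in \<open>auto simp: close_def\<close>)
    qed
    then show "\<bar>eval \<sigma> (Sup x p) - eval \<tau> (Sup x p)\<bar> \<le> L * \<delta>" by (simp only: eval.simps)
  qed (rule L(1))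
next
  case (Inf x p)
  obtain L where L: "L \<ge> 0" "\<And>\<sigma> \<tau> \<delta>. 0 \<le> \<delta> \<Longrightarrow> close (fv p) \<delta> \<sigma> \<tau> \<Longrightarrow>
      \<bar>eval \<sigma> p - eval \<tau> p\<bar> \<le> L * \<delta>" using Inf.IH Inf.prems by auto
  have wp: "wf_form p" using Inf.prems by simp
  show ?case
  proof (intro exI[of _ L] conjI allI impI)
    fix \<sigma> \<tau> :: "nat \<Rightarrow> real \<Rightarrow> real" and \<delta> :: real
    assume d: "0 \<le> \<delta>" "close (fv (Inf x p)) \<delta> \<sigma> \<tau>"
    have c: "close (fv p) \<delta> (\<sigma>(x := f)) (\<tau>(x := f))" if "f \<in> M01" for f
      using d that unfolding close_def by auto
    have "\<bar>(INF f\<in>M01. eval (\<sigma>(x := f)) p) - (INF f\<in>M01. eval (\<tau>(x := f)) p)\<bar> \<le> L * \<delta>"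
    proof (rule INF_diff_le[OF M01_ne])
      fix f assume f: "f \<in> M01"
      show "\<bar>eval (\<sigma>(x := f)) p - eval (\<tau>(x := f)) p\<bar> \<le> L * \<delta>" by (rule L(2)[OF d(1) c[OF f]])
      show "0 \<le> eval (\<sigma>(x := f)) p \<and> eval (\<sigma>(x := f)) p \<le> 1"
        by (rule eval_bounds[OF wp]) (use c[OF f] in \<open>auto simp: close_def\<close>)
      show "0 \<le> eval (\<tau>(x := f)) p \<and> eval (\<tau>(x := f)) p \<le> 1"
        by (rule eval_bounds[OF wp]) (use c[OF f] in \<open>auto simp: close_def\<close>)
    qed
    then show "\<bar>eval \<sigma> (Inf x p) - eval \<tau> (Inf x p)\<bar> \<le> L * \<delta>" by (simp only: eval.simps)
  qed (rule L(1))
qed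

definition homeo :: "(real \<Rightarrow> real) \<Rightarrow> (real \<Rightarrow> real) \<Rightarrow> bool" where
  "homeo \<sigma> \<rho> \<longleftrightarrow> (\<forall>t\<in>{0..1}. \<sigma> t \<in> {0..1} \<and> \<rho> t \<in> {0..1} \<and> \<rho> (\<sigma> t) = t \<and> \<sigma> (\<rho> t) = t)
     \<and> continuous_on {0..1} \<sigma> \<and> continuous_on {0..1} \<rho>
     \<and> (\<forall>s\<in>{0..1}. \<forall>t\<in>{0..1}. s \<le> t \<longrightarrow> \<sigma> s \<le> \<sigma> t \<and> \<rho> s \<le> \<rho> t)
     \<and> \<sigma> 0 = 0 \<and> \<sigma> 1 = 1 \<and> \<rho> 0 = 0 \<and> \<rho> 1 = 1"

lemma homeo_sym: "homeo \<sigma> \<rho> \<Longrightarrow> homeo \<rho> \<sigma>"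
  unfolding homeo_def by blast

definition reparam :: "(real \<Rightarrow> real) \<Rightarrow> (real \<Rightarrow> real) \<Rightarrow> real \<Rightarrow> real" where
  "reparam \<sigma> f = (\<lambda>t. if t \<in> {0..1} then f (\<sigma> t) else f t)"

lemma reparam_in: "t \<in> {0..1} \<Longrightarrow> reparam \<sigma> f t = f (\<sigma> t)"
  unfolding reparam_def by simp

lemma reparam_M01:
  assumes h: "homeo \<sigma> \<rho>" and f: "f \<in> M01"
  shows "reparam \<sigma> f \<in> M01"
proof (rule M01I)
  have "continuous_on {0..1} (f \<circ> \<sigma>)"
  proof (rule continuous_on_compose)
    show "continuous_on {0..1} \<sigma>" using h unfolding homeo_def by blast
    have "\<sigma> ` {0..1} \<subseteq> {0..1}" using h unfolding homeo_def by blast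
    then show "continuous_on (\<sigma> ` {0..1}) f" using continuous_on_subset M01_cont[OF f] by blast
  qed
  then show "continuous_on {0..1} (reparam \<sigma> f)"
    by (rule continuous_on_cong[THEN iffD1, rotated 2]) (auto simp: reparam_def)
  fix s t :: real
  assume st: "0 \<le> s" "s \<le> t" "t \<le> 1"
  have "\<sigma> s \<le> \<sigma> t" "\<sigma> s \<in> {0..1}" "\<sigma> t \<in> {0..1}" using h st unfolding homeo_def by auto
  then show "reparam \<sigma> f s \<le> reparam \<sigma> f t" using st M01_mono[OF f, of "\<sigma> s" "\<sigma> t"]
    by (simp add: reparam_def)
next
  fix t :: real
  assume t: "0 \<le> t" "t \<le> 1"
  have "\<sigma> t \<in> {0..1}" using h t unfolding homeo_def by auto
  then show "0 \<le> reparam \<sigma> f t \<and> reparam \<sigma> f t \<le> 1" using t M01_range[OF f, of "\<sigma> t"]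
    by (simp add: reparam_def)
next
  show "reparam \<sigma> f 0 = 0" using h M01_0[OF f] by (simp add: reparam_def homeo_def)
  show "reparam \<sigma> f 1 = 1" using h M01_1[OF f] by (simp add: reparam_def homeo_def)
qed

lemma reparam_inv:
  assumes h: "homeo \<sigma> \<rho>"
  shows "reparam \<sigma> (reparam \<rho> f) = f"
proof
  fix t
  show "reparam \<sigma> (reparam \<rho> f) t = f t"
  proof (cases "t \<in> {0..1}")
    case True
    then have "\<sigma> t \<in> {0..1}" "\<rho> (\<sigma> t) = t" using h unfolding homeo_def by auto
    then show ?thesis using True by (simp add: reparam_def)
  next
    case False
    then show ?thesis unfolding reparam_def by (simp only: if_False)
  qed
qed

lemma reparam_image:
  assumes h: "homeo \<sigma> \<rho>"
  shows "reparam \<rho> ` M01 = M01"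
proof
  show "reparam \<rho> ` M01 \<subseteq> M01" using reparam_M01[OF homeo_sym[OF h]] by blast
  show "M01 \<subseteq> reparam \<rho> ` M01"
  proof
    fix f assume f: "f \<in> M01"
    have "f = reparam \<rho> (reparam \<sigma> f)" using reparam_inv[OF homeo_sym[OF h]] by simp
    moreover have "reparam \<sigma> f \<in> M01" by (rule reparam_M01[OF h f])
    ultimately show "f \<in> reparam \<rho> ` M01" by blast
  qed
qed

lemma supdist_reparam:
  assumes h: "homeo \<sigma> \<rho>"
  shows "supdist (reparam \<sigma> f) (reparam \<sigma> g) = supdist f g"
proof -
  have im: "\<sigma> ` {0..1} = {0..1}"
  proof
    show "\<sigma> ` {0..1} \<subseteq> {0..1}" using h unfolding homeo_def by blast
    show "{0..1} \<subseteq> \<sigma> ` {0..1}"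
    proof
      fix t :: real assume t: "t \<in> {0..1}"
      then have "\<rho> t \<in> {0..1}" "\<sigma> (\<rho> t) = t" using h unfolding homeo_def by auto
      then show "t \<in> \<sigma> ` {0..1}" by (metis image_eqI)
    qed
  qed
  have "(\<lambda>t. \<bar>reparam \<sigma> f t - reparam \<sigma> g t\<bar>) ` {0..1} = (\<lambda>t. \<bar>f t - g t\<bar>) ` (\<sigma> ` {0..1})"
    by (auto simp: reparam_def image_iff)
  then show ?thesis unfolding supdist_def im by simp
qed

lemma phi_reparam:
  assumes h: "homeo \<sigma> \<rho>" and m: "f \<in> M01" "g \<in> M01" and a: "0 \<le> \<alpha>" "\<alpha> \<le> 2"
  shows "phi \<alpha> (reparam \<sigma> f) (reparam \<sigma> g) = phi \<alpha> f g"
proof -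
  have m': "reparam \<sigma> f \<in> M01" "reparam \<sigma> g \<in> M01" using reparam_M01[OF h] m by auto
  obtain t where t: "t \<in> {0..1}" "reparam \<sigma> f t + reparam \<sigma> g t = \<alpha>"
    using ex_level[OF m' a] by blast
  have st: "\<sigma> t \<in> {0..1}" using h t unfolding homeo_def by auto
  have e: "f (\<sigma> t) + g (\<sigma> t) = \<alpha>" using t by (simp add: reparam_def)
  show ?thesis using phi_eq[OF m' t] phi_eq[OF m st e] t by (simp add: reparam_def)
qed

lemma eval_reparam:
  assumes h: "homeo \<sigma> \<rho>"
  shows "wf_form \<phi> \<Longrightarrow> (\<And>i. i \<in> fv \<phi> \<Longrightarrow> \<tau> i \<in> M01) \<Longrightarrow>
    eval (\<lambda>i. reparam \<sigma> (\<tau> i)) \<phi> = eval \<tau> \<phi>"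
proof (induction \<phi> arbitrary: \<tau>)
  case (Dist x y)
  show ?case using supdist_reparam[OF h] by (simp only: eval.simps)
next
  case (Phi a x y)
  have w: "0 \<le> a \<and> a \<le> 1" using Phi.prems(1) by simp
  have a: "0 \<le> real_of_rat a" "real_of_rat a \<le> 2" using rat01[of a] w by linarith+
  have m: "\<tau> x \<in> M01" "\<tau> y \<in> M01" using Phi.prems by auto
  show ?case using phi_reparam[OF h m a] by (simp only: eval.simps)
next
  case Zero then show ?case by (simp only: eval.simps)
next
  case One then show ?case by (simp only: eval.simps)
next
  case (Neg p)
  have "eval (\<lambda>i. reparam \<sigma> (\<tau> i)) p = eval \<tau> p" by (rule Neg.IH) (use Neg.prems in simp_all)
  then show ?case by (simp only: eval.simps)
next
  case (Half p)
  have "eval (\<lambda>i. reparam \<sigma> (\<tau> i)) p = eval \<tau> p" by (rule Half.IH) (use Half.prems in simp_all)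
  then show ?case by (simp only: eval.simps)
next
  case (Dotminus p q)
  have "eval (\<lambda>i. reparam \<sigma> (\<tau> i)) p = eval \<tau> p" by (rule Dotminus.IH(1)) (use Dotminus.prems in simp_all)
  moreover have "eval (\<lambda>i. reparam \<sigma> (\<tau> i)) q = eval \<tau> q" by (rule Dotminus.IH(2)) (use Dotminus.prems in simp_all)
  ultimately show ?case by (simp only: eval.simps)
next
  case (Sup x p)
  have e: "eval ((\<lambda>i. reparam \<sigma> (\<tau> i))(x := f)) p = eval (\<tau>(x := reparam \<rho> f)) p" if f: "f \<in> M01" for f
  proof -
    have "(\<lambda>i. reparam \<sigma> (\<tau> i))(x := f) = (\<lambda>i. reparam \<sigma> ((\<tau>(x := reparam \<rho> f)) i))"
      using reparam_inv[OF h] by (auto simp: fun_eq_iff)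
    moreover have "eval (\<lambda>i. reparam \<sigma> ((\<tau>(x := reparam \<rho> f)) i)) p = eval (\<tau>(x := reparam \<rho> f)) p"
      by (rule Sup.IH) (use Sup.prems reparam_M01[OF homeo_sym[OF h] f] in auto)
    ultimately show ?thesis by simp
  qed
  have "(SUP f\<in>M01. eval ((\<lambda>i. reparam \<sigma> (\<tau> i))(x := f)) p) = (SUP f\<in>M01. eval (\<tau>(x := reparam \<rho> f)) p)"
    by (rule SUP_cong) (use e in auto)
  also have "\<dots> = (SUP g\<in>reparam \<rho> ` M01. eval (\<tau>(x := g)) p)"
    by (simp add: image_image)
  also have "\<dots> = (SUP g\<in>M01. eval (\<tau>(x := g)) p)" by (simp only: reparam_image[OF h])
  finally show ?case by (simp only: eval.simps)
next
  case (Inf x p)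
  have e: "eval ((\<lambda>i. reparam \<sigma> (\<tau> i))(x := f)) p = eval (\<tau>(x := reparam \<rho> f)) p" if f: "f \<in> M01" for f
  proof -
    have "(\<lambda>i. reparam \<sigma> (\<tau> i))(x := f) = (\<lambda>i. reparam \<sigma> ((\<tau>(x := reparam \<rho> f)) i))"
      using reparam_inv[OF h] by (auto simp: fun_eq_iff)
    moreover have "eval (\<lambda>i. reparam \<sigma> ((\<tau>(x := reparam \<rho> f)) i)) p = eval (\<tau>(x := reparam \<rho> f)) p"
      by (rule Inf.IH) (use Inf.prems reparam_M01[OF homeo_sym[OF h] f] in auto)
    ultimately show ?thesis by simp
  qed
  have "(INF f\<in>M01. eval ((\<lambda>i. reparam \<sigma> (\<tau> i))(x := f)) p) = (INF f\<in>M01. eval (\<tau>(x := reparam \<rho> f)) p)"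
    by (rule INF_cong) (use e in auto)
  also have "\<dots> = (INF g\<in>reparam \<rho> ` M01. eval (\<tau>(x := g)) p)"
    by (simp add: image_image)
  also have "\<dots> = (INF g\<in>M01. eval (\<tau>(x := g)) p)" by (simp only: reparam_image[OF h])
  finally show ?case by (simp only: eval.simps)
qed

lemma strict_inverse:
  fixes F :: "real \<Rightarrow> real"
  assumes c: "continuous_on {0..1} F" and st: "\<And>s t. 0 \<le> s \<Longrightarrow> s < t \<Longrightarrow> t \<le> 1 \<Longrightarrow> F s < F t"
    and F0: "F 0 = 0" and F1: "F 1 = 1"
  shows "\<exists>G. (\<forall>y\<in>{0..1}. G y \<in> {0..1} \<and> F (G y) = y) \<and> (\<forall>t\<in>{0..1}. G (F t) = t)
     \<and> continuous_on {0..1} G \<and> (\<forall>s\<in>{0..1}. \<forall>t\<in>{0..1}. s \<le> t \<longrightarrow> G s \<le> G t)"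
proof -
  have inj: "inj_on F {0..1}"
  proof (rule inj_onI)
    fix s t assume "s \<in> {0..1}" "t \<in> {0..1}" "F s = F t"
    then show "s = t" using st[of s t] st[of t s] by (cases s t rule: linorder_cases) auto
  qed
  have im: "F ` {0..1} = {0..1}"
  proof
    show "F ` {0..1} \<subseteq> {0..1}"
    proof
      fix y assume "y \<in> F ` {0..1}"
      then obtain t where t: "t \<in> {0..1}" "y = F t" by blast
      have "F 0 \<le> F t" using st[of 0 t] t by (cases "t = 0") auto
      moreover have "F t \<le> F 1" using st[of t 1] t by (cases "t = 1") auto
      ultimately show "y \<in> {0..1}" using t F0 F1 by auto
    qed
    show "{0..1} \<subseteq> F ` {0..1}"
    proof
      fix y :: real assume y: "y \<in> {0..1}"
      then obtain t where "0 \<le> t" "t \<le> 1" "F t = y" using IVT'[of F 0 y 1, OF _ _ _ c] F0 F1 by auto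
      then show "y \<in> F ` {0..1}" by force
    qed
  qed
  define G where "G = the_inv_into {0..1} F"
  have G1: "\<forall>y\<in>{0..1}. G y \<in> {0..1} \<and> F (G y) = y"
    unfolding G_def using inj im by (metis f_the_inv_into_f the_inv_into_into order_refl)
  have G2: "\<forall>t\<in>{0..1}. G (F t) = t"
    unfolding G_def using inj by (simp add: the_inv_into_f_f)
  have G3: "continuous_on {0..1} G"
    unfolding G_def using continuous_on_inv_into[OF c compact_Icc inj] im by simp
  have G4: "\<forall>s\<in>{0..1}. \<forall>t\<in>{0..1}. s \<le> t \<longrightarrow> G s \<le> G t"
  proof (intro ballI impI)
    fix s t :: real assume s: "s \<in> {0..1}" and t: "t \<in> {0..1}" and le: "s \<le> t"
    show "G s \<le> G t"
    proof (rule ccontr)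
      assume "\<not> G s \<le> G t"
      then have "F (G t) < F (G s)" using st[of "G t" "G s"] G1 s t by auto
      then show False using G1 s t le by auto
    qed
  qed
  show ?thesis using G1 G2 G3 G4 by blast
qed

lemma homeo_from:
  fixes F1 F2 G1 G2 :: "real \<Rightarrow> real"
  assumes F1: "\<forall>t\<in>{0..1}. F1 t \<in> {0..1}" "continuous_on {0..1} F1" "\<forall>s\<in>{0..1}. \<forall>t\<in>{0..1}. s \<le> t \<longrightarrow> F1 s \<le> F1 t"
    and F2: "\<forall>t\<in>{0..1}. F2 t \<in> {0..1}" "continuous_on {0..1} F2" "\<forall>s\<in>{0..1}. \<forall>t\<in>{0..1}. s \<le> t \<longrightarrow> F2 s \<le> F2 t"
    and G1: "\<forall>y\<in>{0..1}. G1 y \<in> {0..1} \<and> F1 (G1 y) = y" "\<forall>t\<in>{0..1}. G1 (F1 t) = t"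
       "continuous_on {0..1} G1" "\<forall>s\<in>{0..1}. \<forall>t\<in>{0..1}. s \<le> t \<longrightarrow> G1 s \<le> G1 t"
    and G2: "\<forall>y\<in>{0..1}. G2 y \<in> {0..1} \<and> F2 (G2 y) = y" "\<forall>t\<in>{0..1}. G2 (F2 t) = t"
       "continuous_on {0..1} G2" "\<forall>s\<in>{0..1}. \<forall>t\<in>{0..1}. s \<le> t \<longrightarrow> G2 s \<le> G2 t"
    and e: "F1 0 = 0" "F1 1 = 1" "F2 0 = 0" "F2 1 = 1"
  shows "homeo (G1 \<circ> F2) (G2 \<circ> F1)"
  unfolding homeo_def
proof (intro conjI)
  show "\<forall>t\<in>{0..1}. (G1 \<circ> F2) t \<in> {0..1} \<and> (G2 \<circ> F1) t \<in> {0..1} \<and>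
      (G2 \<circ> F1) ((G1 \<circ> F2) t) = t \<and> (G1 \<circ> F2) ((G2 \<circ> F1) t) = t"
    using F1(1) F2(1) G1(1,2) G2(1,2) by auto
  show "continuous_on {0..1} (G1 \<circ> F2)"
    by (rule continuous_on_compose[OF F2(2)]) (rule continuous_on_subset[OF G1(3)], use F2(1) in auto)
  show "continuous_on {0..1} (G2 \<circ> F1)"
    by (rule continuous_on_compose[OF F1(2)]) (rule continuous_on_subset[OF G2(3)], use F1(1) in auto)
  show "\<forall>s\<in>{0..1}. \<forall>t\<in>{0..1}. s \<le> t \<longrightarrow> (G1 \<circ> F2) s \<le> (G1 \<circ> F2) t \<and> (G2 \<circ> F1) s \<le> (G2 \<circ> F1) t"
    using F1(1,3) F2(1,3) G1(4) G2(4) by simp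
  have "G1 0 = 0" using G1(2) e by (metis atLeastAtMost_iff order_refl zero_le_one)
  moreover have "G1 1 = 1" using G1(2) e by (metis atLeastAtMost_iff order_refl zero_le_one)
  moreover have "G2 0 = 0" using G2(2) e by (metis atLeastAtMost_iff order_refl zero_le_one)
  moreover have "G2 1 = 1" using G2(2) e by (metis atLeastAtMost_iff order_refl zero_le_one)
  ultimately show "(G1 \<circ> F2) 0 = 0" "(G1 \<circ> F2) 1 = 1" "(G2 \<circ> F1) 0 = 0" "(G2 \<circ> F1) 1 = 1"
    using e by auto
qed

definition avg :: "nat \<Rightarrow> (nat \<Rightarrow> real \<Rightarrow> real) \<Rightarrow> real \<Rightarrow> real" where
  "avg n g t = (\<Sum>i<n. g i t) / real n"

lemma avg_props:
  assumes n: "n \<ge> 1" and g: "tuple n g"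
  shows "continuous_on {0..1} (avg n g)" "\<forall>s\<in>{0..1}. \<forall>t\<in>{0..1}. s \<le> t \<longrightarrow> avg n g s \<le> avg n g t"
    "avg n g 0 = 0" "avg n g 1 = 1"
proof -
  have m: "\<And>i. i < n \<Longrightarrow> g i \<in> M01" using g unfolding tuple_def by auto
  have "continuous_on {0..1} (\<lambda>t. (\<Sum>i<n. g i t) / real n)"
    by (intro continuous_intros) (use m M01_cont n in auto)
  then show "continuous_on {0..1} (avg n g)" unfolding avg_def by simp
  show "\<forall>s\<in>{0..1}. \<forall>t\<in>{0..1}. s \<le> t \<longrightarrow> avg n g s \<le> avg n g t"
  proof (intro ballI impI)
    fix s t :: real assume st: "s \<in> {0..1}" "t \<in> {0..1}" "s \<le> t"
    have "(\<Sum>i<n. g i s) \<le> (\<Sum>i<n. g i t)" by (rule sum_mono) (use m M01_mono st in auto)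
    then show "avg n g s \<le> avg n g t" unfolding avg_def by (simp add: divide_right_mono)
  qed
  have "(\<Sum>i<n. g i 0) = 0" by (rule sum.neutral) (use m M01_0 in auto)
  then show "avg n g 0 = 0" unfolding avg_def by simp
  have "(\<Sum>i<n. g i 1) = (\<Sum>i<n. 1)" by (rule sum.cong) (use m M01_1 in auto)
  then show "avg n g 1 = 1" unfolding avg_def using n by simp
qed

lemma pert_props:
  fixes S :: "real \<Rightarrow> real"
  assumes c: "continuous_on {0..1} S" and mo: "\<forall>s\<in>{0..1}. \<forall>t\<in>{0..1}. s \<le> t \<longrightarrow> S s \<le> S t"
    and S0: "S 0 = 0" and S1: "S 1 = 1" and e: "0 < \<epsilon>" "\<epsilon> < 1"
    and F_def: "F = (\<lambda>t. (1 - \<epsilon>) * S t + \<epsilon> * t)"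
  shows "continuous_on {0..1} F" "\<And>s t. 0 \<le> s \<Longrightarrow> s < t \<Longrightarrow> t \<le> 1 \<Longrightarrow> F s < F t"
    "F 0 = 0" "F 1 = 1" "\<forall>t\<in>{0..1}. F t \<in> {0..1}" "\<forall>s\<in>{0..1}. \<forall>t\<in>{0..1}. s \<le> t \<longrightarrow> F s \<le> F t"
proof -
  show "continuous_on {0..1} F" unfolding F_def by (intro continuous_intros c)
  have strict: "F s < F t" if "0 \<le> s" "s < t" "t \<le> 1" for s t
  proof -
    have "(1 - \<epsilon>) * S s \<le> (1 - \<epsilon>) * S t" using mo that e by (intro mult_left_mono) auto
    moreover have "\<epsilon> * s < \<epsilon> * t" using that e by simp
    ultimately show ?thesis unfolding F_def by linarith
  qed
  then show "\<And>s t. 0 \<le> s \<Longrightarrow> s < t \<Longrightarrow> t \<le> 1 \<Longrightarrow> F s < F t" by blast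
  show F0: "F 0 = 0" "F 1 = 1" unfolding F_def using S0 S1 by simp_all
  show mono: "\<forall>s\<in>{0..1}. \<forall>t\<in>{0..1}. s \<le> t \<longrightarrow> F s \<le> F t"
    using strict by (metis atLeastAtMost_iff order_le_less)
  show "\<forall>t\<in>{0..1}. F t \<in> {0..1}"
    using mono F0 by (metis atLeastAtMost_iff order_refl zero_le_one)
qed

lemma eps_zero:
  fixes d C :: real
  assumes C: "C \<ge> 0" and d: "d \<ge> 0" and h: "\<And>\<epsilon>. 0 < \<epsilon> \<Longrightarrow> \<epsilon> \<le> 1/2 \<Longrightarrow> d \<le> C * \<epsilon>"
  shows "d = 0"
proof (rule ccontr)
  assume "d \<noteq> 0"
  then have dp: "d > 0" using d by simp
  define \<epsilon> where "\<epsilon> = min (1/2) (d / (2 * (C + 1)))"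
  have ep: "0 < \<epsilon>" "\<epsilon> \<le> 1/2" unfolding \<epsilon>_def using dp C by (auto simp: min_def)
  have "C * \<epsilon> \<le> C * (d / (2 * (C + 1)))" unfolding \<epsilon>_def using C by (intro mult_left_mono) auto
  also have "\<dots> = d * (C / (2 * (C + 1)))" by simp
  also have "\<dots> < d * 1"
  proof (rule mult_strict_left_mono[OF _ dp])
    show "C / (2 * (C + 1)) < 1" using C by (simp add: divide_less_eq)
  qed
  also have "\<dots> = d" by simp
  finally show False using h[OF ep] by linarith
qed

lemma chain_bound:
  fixes a b :: "nat \<Rightarrow> real"
  assumes "i < n" "\<And>k. k < n \<Longrightarrow> a k \<le> b k"
  shows "b i - a i \<le> (\<Sum>k<n. b k - a k)"
  by (rule member_le_sum) (use assms in auto)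

lemma same_image_eval:
  assumes n: "n \<ge> 1" and g: "tuple n g" and h: "tuple n h"
    and im: "\<And>t. t \<in> {0..1} \<Longrightarrow> \<exists>s\<in>{0..1}. \<forall>i<n. h i t = g i s"
    and w: "wf_form \<phi>" and fvs: "fv \<phi> \<subseteq> {..<n}"
  shows "eval g \<phi> = eval h \<phi>"
proof -
  have mg: "\<And>i. i < n \<Longrightarrow> g i \<in> M01" using g unfolding tuple_def by auto
  have mh: "\<And>i. i < n \<Longrightarrow> h i \<in> M01" using h unfolding tuple_def by auto
  obtain L where L: "L \<ge> 0" "\<And>\<sigma> \<tau> \<delta>. 0 \<le> \<delta> \<Longrightarrow> close (fv \<phi>) \<delta> \<sigma> \<tau> \<Longrightarrow>
      \<bar>eval \<sigma> \<phi> - eval \<tau> \<phi>\<bar> \<le> L * \<delta>" using eval_lip[OF w] by blast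
  note ag = avg_props[OF n g] and ah = avg_props[OF n h]
  have key: "\<bar>eval g \<phi> - eval h \<phi>\<bar> \<le> (L * (2 * real n)) * \<epsilon>" if e: "0 < \<epsilon>" "\<epsilon> \<le> 1/2" for \<epsilon>
  proof -
    have e1: "\<epsilon> < 1" using e by simp
    define F1 where "F1 = (\<lambda>t. (1 - \<epsilon>) * avg n g t + \<epsilon> * t)"
    define F2 where "F2 = (\<lambda>t. (1 - \<epsilon>) * avg n h t + \<epsilon> * t)"
    note P1 = pert_props[of "avg n g" \<epsilon>, OF ag e(1) e1 F1_def]
    note P2 = pert_props[of "avg n h" \<epsilon>, OF ah e(1) e1 F2_def]
    obtain G1 where G1: "\<forall>y\<in>{0..1}. G1 y \<in> {0..1} \<and> F1 (G1 y) = y" "\<forall>t\<in>{0..1}. G1 (F1 t) = t"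
       "continuous_on {0..1} G1" "\<forall>s\<in>{0..1}. \<forall>t\<in>{0..1}. s \<le> t \<longrightarrow> G1 s \<le> G1 t"
      using strict_inverse[OF P1(1-4)] by blast
    obtain G2 where G2: "\<forall>y\<in>{0..1}. G2 y \<in> {0..1} \<and> F2 (G2 y) = y" "\<forall>t\<in>{0..1}. G2 (F2 t) = t"
       "continuous_on {0..1} G2" "\<forall>s\<in>{0..1}. \<forall>t\<in>{0..1}. s \<le> t \<longrightarrow> G2 s \<le> G2 t"
      using strict_inverse[OF P2(1-4)] by blast
    define \<sigma> where "\<sigma> = G1 \<circ> F2"
    have hom: "homeo \<sigma> (G2 \<circ> F1)" unfolding \<sigma>_def
      by (rule homeo_from[OF P1(5,1,6) P2(5,1,6) G1 G2 P1(3,4) P2(3,4)])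
    define g' where "g' = (\<lambda>i. reparam \<sigma> (g i))"
    have e_g: "eval g' \<phi> = eval g \<phi>" unfolding g'_def
      by (rule eval_reparam[OF hom w]) (use fvs mg in auto)
    have close: "close (fv \<phi>) (2 * real n * \<epsilon>) g' h"
      unfolding close_def
    proof (intro ballI conjI)
      fix i assume "i \<in> fv \<phi>"
      then have i: "i < n" using fvs by auto
      show "g' i \<in> M01" unfolding g'_def by (rule reparam_M01[OF hom mg[OF i]])
      show "h i \<in> M01" by (rule mh[OF i])
      fix t :: real assume t: "t \<in> {0..1}"
      define u where "u = \<sigma> t"
      have u: "u \<in> {0..1}" using hom t unfolding homeo_def u_def by auto
      have g'u: "g' i t = g i u" unfolding g'_def u_def using t by (simp add: reparam_in)
      have Fu: "F1 u = F2 t" unfolding u_def \<sigma>_def using G1(1) P2(5) t by auto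
      have au: "\<bar>avg n g u - avg n h t\<bar> \<le> 2 * \<epsilon>"
      proof -
        have "(1 - \<epsilon>) * (avg n g u - avg n h t) = \<epsilon> * (t - u)"
          using Fu unfolding F1_def F2_def by (simp add: algebra_simps)
        then have "(1 - \<epsilon>) * \<bar>avg n g u - avg n h t\<bar> = \<epsilon> * \<bar>t - u\<bar>"
          using e by (metis abs_mult abs_of_nonneg abs_of_pos diff_ge_0_iff_ge e1 less_eq_real_def)
        also have "\<dots> \<le> \<epsilon> * 1" using t u e by (intro mult_left_mono) auto
        finally have "(1 - \<epsilon>) * \<bar>avg n g u - avg n h t\<bar> \<le> \<epsilon>" by simp
        moreover have "1/2 \<le> 1 - \<epsilon>" using e by simp
        ultimately have "(1/2) * \<bar>avg n g u - avg n h t\<bar> \<le> \<epsilon>"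
          by (smt (verit) abs_ge_zero mult_right_mono)
        then show ?thesis by simp
      qed
      obtain s where s: "s \<in> {0..1}" "\<forall>k<n. h k t = g k s" using im[OF t] by blast
      have hs: "avg n h t = avg n g s" unfolding avg_def using s(2) by simp
      have nn: "real n > 0" using n by simp
      have "\<bar>g i u - g i s\<bar> \<le> real n * \<bar>avg n g u - avg n g s\<bar>"
      proof (cases "u \<le> s")
        case True
        have le: "\<And>k. k < n \<Longrightarrow> g k u \<le> g k s" using M01_mono[OF mg] True u s by auto
        have "g i s - g i u \<le> (\<Sum>k<n. g k s - g k u)" by (rule chain_bound[OF i le])
        also have "\<dots> = real n * (avg n g s - avg n g u)" unfolding avg_def using nn
          by (simp add: sum_subtractf field_simps)
        finally show ?thesis using le[OF i] by (smt (verit, best) nn mult_left_mono abs_ge_self abs_minus_commute)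
      next
        case False
        have le: "\<And>k. k < n \<Longrightarrow> g k s \<le> g k u" using M01_mono[OF mg] False u s by auto
        have "g i u - g i s \<le> (\<Sum>k<n. g k u - g k s)" by (rule chain_bound[OF i le])
        also have "\<dots> = real n * (avg n g u - avg n g s)" unfolding avg_def using nn
          by (simp add: sum_subtractf field_simps)
        finally show ?thesis using le[OF i] by (smt (verit, best) nn mult_left_mono abs_ge_self)
      qed
      also have "\<dots> \<le> real n * (2 * \<epsilon>)" using au hs nn by (intro mult_left_mono) auto
      finally show "\<bar>g' i t - h i t\<bar> \<le> 2 * real n * \<epsilon>" using g'u s(2) i by simp
    qed
    have "\<bar>eval g' \<phi> - eval h \<phi>\<bar> \<le> L * (2 * real n * \<epsilon>)"
      by (rule L(2)[OF _ close]) (use e in simp)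
    then show ?thesis using e_g by (simp add: mult.assoc)
  qed
  have "\<bar>eval g \<phi> - eval h \<phi>\<bar> = 0"
    by (rule eps_zero[OF _ _ key]) (use L(1) in auto)
  then show ?thesis by simp
qed

lemma level_compact:
  assumes f: "f \<in> M01"
  shows "compact {s\<in>{0..1}. f s = a}"
proof -
  have "closed ({0..1} \<inter> f -` {a})"
    by (rule continuous_closed_preimage[OF M01_cont[OF f]]) auto
  then have "compact ({0..1::real} \<inter> ({0..1} \<inter> f -` {a}))"
    by (rule compact_Int_closed[OF compact_Icc])
  moreover have "{0..1::real} \<inter> ({0..1} \<inter> f -` {a}) = {s\<in>{0..1}. f s = a}" by auto
  ultimately show ?thesis by simp
qed

lemma level_min:
  assumes f: "f \<in> M01" and a: "0 \<le> a" "a \<le> 1"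
  shows "\<exists>l\<in>{0..1}. f l = a \<and> (\<forall>s\<in>{0..1}. f s = a \<longrightarrow> l \<le> s)"
proof -
  have ne: "{s\<in>{0..1}. f s = a} \<noteq> {}" using M01_attains[OF f a] by blast
  obtain l where "l \<in> {s\<in>{0..1}. f s = a}" "\<forall>t\<in>{s\<in>{0..1}. f s = a}. l \<le> t"
    using compact_attains_inf[OF level_compact[OF f] ne] by blast
  then show ?thesis by auto
qed

lemma level_max:
  assumes f: "f \<in> M01" and a: "0 \<le> a" "a \<le> 1"
  shows "\<exists>l\<in>{0..1}. f l = a \<and> (\<forall>s\<in>{0..1}. f s = a \<longrightarrow> s \<le> l)"
proof -
  have ne: "{s\<in>{0..1}. f s = a} \<noteq> {}" using M01_attains[OF f a] by blast
  obtain l where "l \<in> {s\<in>{0..1}. f s = a}" "\<forall>t\<in>{s\<in>{0..1}. f s = a}. t \<le> l"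
    using compact_attains_sup[OF level_compact[OF f] ne] by blast
  then show ?thesis by auto
qed

lemma helly:
  assumes g: "tuple n g" and a: "\<forall>i<n. a i \<in> {0..1}"
    and pw: "\<forall>i j. i < j \<and> j < n \<longrightarrow> (\<exists>t\<in>{0..1}. a i = g i t \<and> a j = g j t)"
  shows "\<exists>t\<in>{0..1}. \<forall>i<n. a i = g i t"
proof (cases "n = 0")
  case True
  then show ?thesis by (intro bexI[of _ 0]) auto
next
  case False
  have m: "\<And>i. i < n \<Longrightarrow> g i \<in> M01" using g unfolding tuple_def by auto
  have pw': "\<exists>t\<in>{0..1}. a i = g i t \<and> a j = g j t" if ij: "i < n" "j < n" for i j
  proof (cases i j rule: linorder_cases)
    case less then show ?thesis using pw that by blast
  next
    case equal
    obtain t where "t \<in> {0..1}" "g i t = a i" using M01_attains[OF m[OF ij(1)], of "a i"] a ij by auto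
    then show ?thesis using equal by metis
  next
    case greater then show ?thesis using pw that by blast
  qed
  define l where "l i = (SOME l. l \<in> {0..1} \<and> g i l = a i \<and> (\<forall>s\<in>{0..1}. g i s = a i \<longrightarrow> l \<le> s))" for i
  have l: "l i \<in> {0..1} \<and> g i (l i) = a i \<and> (\<forall>s\<in>{0..1}. g i s = a i \<longrightarrow> l i \<le> s)" if "i < n" for i
  proof -
    have "\<exists>l. l \<in> {0..1} \<and> g i l = a i \<and> (\<forall>s\<in>{0..1}. g i s = a i \<longrightarrow> l \<le> s)"
      using level_min[OF m[OF that], of "a i"] a that by auto
    then show ?thesis unfolding l_def by (rule someI_ex)
  qed
  define T where "T = Max (l ` {..<n})"
  have fin: "finite (l ` {..<n})" "l ` {..<n} \<noteq> {}" using False by auto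
  obtain k where k: "k < n" "T = l k" using Max_in[OF fin] unfolding T_def by auto
  have T: "T \<in> {0..1}" using l k by auto
  show ?thesis
  proof (intro bexI[OF _ T] allI impI)
    fix i assume i: "i < n"
    have "l i \<le> T" unfolding T_def using fin i by auto
    then have ge: "a i \<le> g i T" using l[OF i] M01_mono[OF m[OF i], of "l i" T] T by auto
    obtain s where s: "s \<in> {0..1}" "a k = g k s" "a i = g i s" using pw'[OF k(1) i] by blast
    have "l k \<le> s" using l[OF k(1)] s by auto
    then have "g i T \<le> a i" using k s M01_mono[OF m[OF i], of T s] T by auto
    then show "a i = g i T" using ge by simp
  qed
qed

lemma interval_arg:
  assumes x: "x \<in> M01" and y: "y \<in> M01" and a: "0 \<le> a" "a \<le> 1" and b: "0 \<le> b" "b \<le> 1"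
    and P1: "\<And>s. s \<in> {0..1} \<Longrightarrow> x s < a \<Longrightarrow> y s \<le> b"
    and P2: "\<And>s. s \<in> {0..1} \<Longrightarrow> y s < b \<Longrightarrow> x s \<le> a"
  shows "\<exists>s\<in>{0..1}. x s = a \<and> y s = b"
proof -
  obtain p where p: "p \<in> {0..1}" "x p = a" "\<forall>s\<in>{0..1}. x s = a \<longrightarrow> p \<le> s"
    using level_min[OF x a] by blast
  obtain q where q: "q \<in> {0..1}" "x q = a" "\<forall>s\<in>{0..1}. x s = a \<longrightarrow> s \<le> q"
    using level_max[OF x a] by blast
  have pq: "p \<le> q" using p q by auto
  have cy: "continuous_on {0..1} y" by (rule M01_cont[OF y])
  have yq: "b \<le> y q"
  proof (rule ccontr)
    assume "\<not> b \<le> y q"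
    then have lt: "y q < b" by simp
    have q1: "q < 1" using lt M01_1[OF y] b q(1) by (cases "q = 1") auto
    obtain d where d: "d > 0" "\<forall>s\<in>{0..1}. dist s q < d \<longrightarrow> dist (y s) (y q) < b - y q"
      using cy q(1) lt unfolding continuous_on_iff by (metis diff_gt_0_iff_gt)
    define s where "s = min 1 (q + d/2)"
    have s: "s \<in> {0..1}" "q < s" "dist s q < d" using q q1 d unfolding s_def dist_real_def by auto
    have "y s < b" using d(2) s unfolding dist_real_def by fastforce
    then have "x s \<le> a" using P2 s by auto
    moreover have "a \<le> x s" using M01_mono[OF x, of q s] q s by auto
    ultimately have "x s = a" by simp
    then show False using q(3) s by auto
  qed
  have yp: "y p \<le> b"
  proof (rule ccontr)
    assume "\<not> y p \<le> b"
    then have lt: "b < y p" by simp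
    have p0: "0 < p" using lt M01_0[OF y] b p(1) by (cases "p = 0") auto
    obtain d where d: "d > 0" "\<forall>s\<in>{0..1}. dist s p < d \<longrightarrow> dist (y s) (y p) < y p - b"
      using cy p(1) lt unfolding continuous_on_iff by (metis diff_gt_0_iff_gt)
    define s where "s = max 0 (p - d/2)"
    have s: "s \<in> {0..1}" "s < p" "dist s p < d" using p p0 d unfolding s_def dist_real_def by auto
    have ys: "b < y s" using d(2) s unfolding dist_real_def by fastforce
    have "x s \<le> a" using M01_mono[OF x, of s p] p s by auto
    moreover have "x s \<noteq> a" using p(3) s by auto
    ultimately have "x s < a" by simp
    then have "y s \<le> b" using P1 s by auto
    then show False using ys by simp
  qed
  have cpq: "continuous_on {p..q} y" using continuous_on_subset[OF cy] p q by auto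
  obtain s where s: "p \<le> s" "s \<le> q" "y s = b" using IVT'[of y p b q, OF yp yq pq cpq] by blast
  have sI: "s \<in> {0..1}" using s p q by auto
  have "x p \<le> x s" using M01_mono[OF x, of p s] s p sI by auto
  moreover have "x s \<le> x q" using M01_mono[OF x, of s q] s q sI by auto
  ultimately have "x s = a" using p q by simp
  then show ?thesis using sI s by blast
qed

definition fplus :: "form \<Rightarrow> form \<Rightarrow> form" where
  "fplus p q = Neg (Dotminus (Neg p) q)"

definition dblpow :: "nat \<Rightarrow> form \<Rightarrow> form" where
  "dblpow m p = ((\<lambda>r. fplus r r) ^^ m) p"

lemma fplus_props: "fv (fplus p q) = fv p \<union> fv q" "wf_form (fplus p q) = (wf_form p \<and> wf_form q)"
  "eval \<sigma> (fplus p q) = min 1 (eval \<sigma> p + eval \<sigma> q)"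
  unfolding fplus_def by (simp_all only: fv.simps wf_form.simps eval.simps)

lemma dblpow_fv: "fv (dblpow m p) = fv p"
  unfolding dblpow_def by (induction m) (simp_all add: fplus_props)

lemma dblpow_wf: "wf_form (dblpow m p) = wf_form p"
  unfolding dblpow_def by (induction m) (simp_all add: fplus_props)

lemma dblpow_eval: "0 \<le> eval \<sigma> p \<Longrightarrow> eval \<sigma> p \<le> 1 \<Longrightarrow> eval \<sigma> (dblpow m p) = min 1 (2 ^ m * eval \<sigma> p)"
proof (induction m)
  case 0
  then show ?case unfolding dblpow_def by simp
next
  case (Suc m)
  have "eval \<sigma> (dblpow (Suc m) p) = min 1 (2 * eval \<sigma> (dblpow m p))"
    unfolding dblpow_def by (simp add: fplus_props)
  also have "\<dots> = min 1 (2 ^ Suc m * eval \<sigma> p)" using Suc by (auto simp: min_def)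
  finally show ?case .
qed

definition Vform :: "nat \<Rightarrow> rat \<Rightarrow> nat \<Rightarrow> nat \<Rightarrow> form" where
  "Vform m q i j = Inf (Suc (i + j)) (fplus (Dist (Suc (i + j)) j) (dblpow m (Phi q (Suc (i + j)) i)))"

definition Vval :: "nat \<Rightarrow> real \<Rightarrow> (real \<Rightarrow> real) \<Rightarrow> (real \<Rightarrow> real) \<Rightarrow> real" where
  "Vval m \<alpha> x y = (INF f\<in>M01. min 1 (supdist f y + min 1 (2 ^ m * phi \<alpha> f x)))"

lemma Vform_fv: "fv (Vform m q i j) \<subseteq> {i, j}"
proof -
  have "fv (Vform m q i j) = ({Suc (i + j), j} \<union> {Suc (i + j), i}) - {Suc (i + j)}"
    unfolding Vform_def by (simp only: fv.simps fplus_props dblpow_fv)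
  then show ?thesis by blast
qed

lemma Vform_wf: "0 \<le> q \<Longrightarrow> q \<le> 1 \<Longrightarrow> wf_form (Vform m q i j)"
  unfolding Vform_def by (simp only: wf_form.simps fplus_props dblpow_wf)

lemma phi_bounds:
  assumes "f \<in> M01" "x \<in> M01" "0 \<le> \<alpha>" "\<alpha> \<le> 2"
  shows "0 \<le> phi \<alpha> f x \<and> phi \<alpha> f x \<le> 1"
proof -
  obtain t where t: "t \<in> {0..1}" "f t + x t = \<alpha>" using ex_level[OF assms] by blast
  show ?thesis using phi_eq[OF assms(1,2) t] M01_range[OF assms(1)] t by simp
qed

lemma Vform_eval:
  assumes x: "\<sigma> i \<in> M01" and y: "\<sigma> j \<in> M01" and q: "0 \<le> q" "q \<le> 1"
  shows "eval \<sigma> (Vform m q i j) = Vval m (real_of_rat q) (\<sigma> i) (\<sigma> j)"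
proof -
  define z where "z = Suc (i + j)"
  have zi: "z \<noteq> i" "z \<noteq> j" unfolding z_def by auto
  have qr: "0 \<le> real_of_rat q" "real_of_rat q \<le> 2" using rat01[OF q] by linarith+
  have e: "eval (\<sigma>(z := f)) (fplus (Dist z j) (dblpow m (Phi q z i)))
      = min 1 (supdist f (\<sigma> j) + min 1 (2 ^ m * phi (real_of_rat q) f (\<sigma> i)))" if f: "f \<in> M01" for f
  proof -
    have pb: "0 \<le> phi (real_of_rat q) f (\<sigma> i) \<and> phi (real_of_rat q) f (\<sigma> i) \<le> 1"
      by (rule phi_bounds[OF f x qr])
    have ep: "eval (\<sigma>(z := f)) (Phi q z i) = phi (real_of_rat q) f (\<sigma> i)"
      using zi by (simp only: eval.simps) simp
    have "eval (\<sigma>(z := f)) (dblpow m (Phi q z i)) = min 1 (2 ^ m * phi (real_of_rat q) f (\<sigma> i))"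
      using dblpow_eval[of "\<sigma>(z := f)" "Phi q z i" m] ep pb by simp
    moreover have "eval (\<sigma>(z := f)) (Dist z j) = supdist f (\<sigma> j)"
      using zi by (simp only: eval.simps) simp
    ultimately show ?thesis by (simp add: fplus_props)
  qed
  have "eval \<sigma> (Vform m q i j) = (INF f\<in>M01. eval (\<sigma>(z := f)) (fplus (Dist z j) (dblpow m (Phi q z i))))"
    unfolding Vform_def z_def[symmetric] by (simp only: eval.simps)
  also have "\<dots> = Vval m (real_of_rat q) (\<sigma> i) (\<sigma> j)"
    unfolding Vval_def by (rule INF_cong) (use e in auto)
  finally show ?thesis .
qed

lemma Vval_nonneg:
  assumes x: "x \<in> M01" and y: "y \<in> M01" and a: "0 \<le> \<alpha>" "\<alpha> \<le> 2" and f: "f \<in> M01"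
  shows "0 \<le> min 1 (supdist f y + min 1 (2 ^ m * phi \<alpha> f x))"
  using supdist_bounds[OF f y] phi_bounds[OF f x a] by simp

lemma Vval_upper:
  assumes x: "x \<in> M01" and y: "y \<in> M01" and a: "0 \<le> \<alpha>" "\<alpha> \<le> 1"
    and t0: "t0 \<in> {0..1}" "x t0 = \<alpha>"
  shows "Vval m \<alpha> x y \<le> y t0"
proof -
  have a2: "\<alpha> \<le> 2" using a by simp
  have bdd: "bdd_below ((\<lambda>f. min 1 (supdist f y + min 1 (2 ^ m * phi \<alpha> f x))) ` M01)"
    using Vval_nonneg[OF x y a(1) a2] by (intro bdd_belowI[of _ 0]) auto
  define c where "c = y t0"
  have c: "0 \<le> c" "c \<le> 1" using M01_range[OF y] t0 unfolding c_def by auto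
  show ?thesis
  proof (cases "c = 1")
    case True
    have "Vval m \<alpha> x y \<le> min 1 (supdist (\<lambda>t. t) y + min 1 (2 ^ m * phi \<alpha> (\<lambda>t. t) x))"
      unfolding Vval_def by (rule cINF_lower[OF bdd id_M01])
    also have "\<dots> \<le> 1" by simp
    finally show ?thesis using True unfolding c_def by simp
  next
    case False
    then have c1: "c < 1" using c by simp
    define f where "f = (\<lambda>t. max 0 ((y t - c) / (1 - c)))"
    have f: "f \<in> M01"
    proof (rule M01I)
      show "continuous_on {0..1} f" unfolding f_def
        by (intro continuous_intros M01_cont[OF y]) (use c1 in simp)
      fix s t :: real assume st: "0 \<le> s" "s \<le> t" "t \<le> 1"
      have "y s \<le> y t" by (rule M01_mono[OF y st])
      then have "(y s - c) / (1 - c) \<le> (y t - c) / (1 - c)" using c1 by (simp add: divide_right_mono)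
      then show "f s \<le> f t" unfolding f_def by simp
    next
      fix t :: real assume t: "0 \<le> t" "t \<le> 1"
      have "y t \<le> 1" using M01_range[OF y t] by simp
      then have "(y t - c) / (1 - c) \<le> 1" using c1 by (simp add: divide_le_eq)
      then show "0 \<le> f t \<and> f t \<le> 1" unfolding f_def by simp
    next
      show "f 0 = 0" unfolding f_def using M01_0[OF y] c c1 by (simp add: divide_le_0_iff)
      show "f 1 = 1" unfolding f_def using M01_1[OF y] c1 by simp
    qed
    have ft0: "f t0 = 0" unfolding f_def c_def using c1 unfolding c_def by simp
    have ph: "phi \<alpha> f x = 0" using phi_eq[OF f x t0(1)] ft0 t0 by simp
    have sd: "supdist f y \<le> c"
    proof (rule supdist_le)
      fix t :: real assume t: "t \<in> {0..1}"
      have yt: "0 \<le> y t" "y t \<le> 1" using M01_range[OF y] t by auto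
      show "\<bar>f t - y t\<bar> \<le> c"
      proof (cases "y t \<le> c")
        case True
        then have "(y t - c) / (1 - c) \<le> 0" using c1 by (simp add: divide_le_0_iff)
        then have "f t = 0" unfolding f_def by simp
        then show ?thesis using True yt by simp
      next
        case False
        then have "f t = (y t - c) / (1 - c)" unfolding f_def using c1 by simp
        moreover have "y t - (y t - c) / (1 - c) = c * (1 - y t) / (1 - c)"
          using c1 by (simp add: field_simps)
        moreover have "c * (1 - y t) / (1 - c) \<le> c"
        proof -
          have "c * (1 - y t) \<le> c * (1 - c)" using c False by (intro mult_left_mono) auto
          then show ?thesis using c1 by (simp add: divide_le_eq)
        qed
        moreover have "0 \<le> c * (1 - y t) / (1 - c)" using c c1 yt by simp
        ultimately have "f t - y t \<le> 0" "y t - f t \<le> c" by linarith+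
        then show ?thesis by (simp add: abs_le_iff)
      qed
    qed
    have "Vval m \<alpha> x y \<le> min 1 (supdist f y + min 1 (2 ^ m * phi \<alpha> f x))"
      unfolding Vval_def by (rule cINF_lower[OF bdd f])
    also have "\<dots> \<le> c" using sd ph by simp
    finally show ?thesis unfolding c_def .
  qed
qed

lemma Vval_lower:
  assumes x: "x \<in> M01" and y: "y \<in> M01" and a: "0 \<le> \<alpha>" "\<alpha> \<le> 1"
    and t: "t \<in> {0..1}" "x t < \<alpha>" and big: "1 \<le> 2 ^ m * (\<alpha> - x t)"
  shows "y t \<le> Vval m \<alpha> x y"
  unfolding Vval_def
proof (rule cINF_greatest[OF M01_ne])
  fix f assume f: "f \<in> M01"
  have a2: "\<alpha> \<le> 2" using a by simp
  obtain t1 where t1: "t1 \<in> {0..1}" "f t1 + x t1 = \<alpha>" using ex_level[OF f x a(1) a2] by blast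
  have ph: "phi \<alpha> f x = f t1" by (rule phi_eq[OF f x t1])
  have yt: "0 \<le> y t" "y t \<le> 1" using M01_range[OF y] t by auto
  have sd0: "0 \<le> supdist f y" using supdist_bounds[OF f y] by simp
  define e where "e = f t1"
  have e0: "0 \<le> e" "e \<le> 1" using M01_range[OF f] t1 unfolding e_def by auto
  show "y t \<le> min 1 (supdist f y + min 1 (2 ^ m * phi \<alpha> f x))"
  proof (cases "e < \<alpha> - x t")
    case True
    then have "x t < x t1" using t1 unfolding e_def by simp
    then have "t < t1"
    proof -
      assume lt: "x t < x t1"
      show "t < t1"
      proof (rule ccontr)
        assume "\<not> t < t1"
        then have "t1 \<le> t" by simp
        then have "x t1 \<le> x t" using M01_mono[OF x, of t1 t] t t1 by auto
        then show False using lt by simp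
      qed
    qed
    then have "f t \<le> e" unfolding e_def using M01_mono[OF f, of t t1] t t1 by auto
    moreover have "\<bar>f t - y t\<bar> \<le> supdist f y" by (rule supdist_ge[OF f y t(1)])
    ultimately have h1: "y t - e \<le> supdist f y" by linarith
    have h2: "e \<le> min 1 (2 ^ m * e)"
    proof -
      have "(1::real) \<le> 2 ^ m" by simp
      then have "1 * e \<le> 2 ^ m * e" by (rule mult_right_mono) (use e0 in simp)
      then show ?thesis using e0 by simp
    qed
    have s: "y t \<le> supdist f y + min 1 (2 ^ m * phi \<alpha> f x)"
      using h1 h2 unfolding ph e_def by linarith
    show ?thesis using s yt(2) by (auto simp: min_def)
  next
    case False
    then have "\<alpha> - x t \<le> e" by simp
    then have "2 ^ m * (\<alpha> - x t) \<le> 2 ^ m * e" by (rule mult_left_mono) simp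
    then have "1 \<le> 2 ^ m * e" using big by linarith
    then have "min 1 (2 ^ m * phi \<alpha> f x) = 1" using ph unfolding e_def by simp
    then show ?thesis using yt sd0 by simp
  qed
qed

lemma same_type_sym: "same_type_on V g h \<Longrightarrow> same_type_on V h g"
  unfolding same_type_on_def by metis

lemma prop1:
  assumes mg: "g i \<in> M01" "g j \<in> M01" and mh: "h i \<in> M01" "h j \<in> M01" and ij: "i \<noteq> j"
    and st: "same_type_on {i, j} g h" and t: "t \<in> {0..1}" and s: "s \<in> {0..1}" and lt: "h i s < g i t"
  shows "h j s \<le> g j t"
proof -
  obtain q where q: "h i s < real_of_rat q" "real_of_rat q < g i t" using of_rat_dense[OF lt] by blast
  define \<alpha> where "\<alpha> = real_of_rat q"
  have r1: "0 \<le> h i s" using M01_range[OF mh(1)] s by auto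
  have r2: "g i t \<le> 1" using M01_range[OF mg(1)] t by auto
  have q01: "0 \<le> q" "q \<le> 1"
  proof -
    have "(0::real) \<le> real_of_rat q" using q r1 by linarith
    then show "0 \<le> q" by (metis of_rat_0 of_rat_less_eq)
    have "real_of_rat q \<le> (1::real)" using q r2 by linarith
    then show "q \<le> 1" by (metis of_rat_1 of_rat_less_eq)
  qed
  have a01: "0 \<le> \<alpha>" "\<alpha> \<le> 1" using q r1 r2 unfolding \<alpha>_def by linarith+
  obtain t0 where t0: "t0 \<in> {0..1}" "g i t0 = \<alpha>" using M01_attains[OF mg(1) a01] by blast
  have "t0 \<le> t"
  proof (rule ccontr)
    assume "\<not> t0 \<le> t"
    then have "g i t \<le> g i t0" using M01_mono[OF mg(1), of t t0] t t0 by auto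
    then show False using q t0 unfolding \<alpha>_def by linarith
  qed
  then have yt0: "g j t0 \<le> g j t" using M01_mono[OF mg(2), of t0 t] t t0 by auto
  have d: "0 < \<alpha> - h i s" using q unfolding \<alpha>_def by simp
  obtain m where m: "1 / (\<alpha> - h i s) < 2 ^ m" using real_arch_pow[of 2 "1 / (\<alpha> - h i s)"] by auto
  have big: "1 \<le> 2 ^ m * (\<alpha> - h i s)" using m d by (simp add: divide_less_eq)
  define V where "V = Vform m q i j"
  have wV: "wf_form V" unfolding V_def by (rule Vform_wf[OF q01])
  have fV: "fv V \<subseteq> {i, j}" unfolding V_def by (rule Vform_fv)
  have eq: "eval g V = eval h V" using st wV fV unfolding same_type_on_def by blast
  have "eval g V = Vval m \<alpha> (g i) (g j)" unfolding V_def \<alpha>_def by (rule Vform_eval[OF mg q01])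
  also have "\<dots> \<le> g j t0" by (rule Vval_upper[OF mg a01 t0])
  finally have 1: "eval g V \<le> g j t0" .
  have "h j s \<le> Vval m \<alpha> (h i) (h j)"
    by (rule Vval_lower[OF mh a01 s _ big]) (use q in \<open>simp add: \<alpha>_def\<close>)
  also have "\<dots> = eval h V" unfolding V_def \<alpha>_def by (rule Vform_eval[OF mh q01, symmetric])
  finally show ?thesis using 1 eq yt0 by linarith
qed

lemma pair_transfer:
  assumes mg: "g i \<in> M01" "g j \<in> M01" and mh: "h i \<in> M01" "h j \<in> M01" and ij: "i \<noteq> j"
    and st: "same_type_on {i, j} g h" and t: "t \<in> {0..1}"
  shows "\<exists>s\<in>{0..1}. h i s = g i t \<and> h j s = g j t"
proof -
  have st': "same_type_on {j, i} g h" using st by (simp add: insert_commute)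
  show ?thesis
  proof (rule interval_arg[OF mh])
    show "0 \<le> g i t" "g i t \<le> 1" using M01_range[OF mg(1)] t by auto
    show "0 \<le> g j t" "g j t \<le> 1" using M01_range[OF mg(2)] t by auto
    fix s :: real assume s: "s \<in> {0..1}"
    show "h i s < g i t \<Longrightarrow> h j s \<le> g j t" by (rule prop1[OF mg mh ij st t s])
    show "h j s < g j t \<Longrightarrow> h i s \<le> g i t"
      by (rule prop1[OF mg(2,1) mh(2,1) _ st' t s]) (use ij in auto)
  qed
qed

theorem mainTheorem17:
  fixes n :: nat and g :: "nat \<Rightarrow> real \<Rightarrow> real"
  assumes "tuple n g"
  shows "(\<forall>h. tuple n h \<and> (\<forall>i j. i < j \<and> j < n \<longrightarrow> same_type_on {i, j} g h)
              \<longrightarrow> same_type_on {..<n} g h)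
       \<and> (\<forall>a :: nat \<Rightarrow> real. (\<forall>i<n. a i \<in> {0..1})
              \<and> (\<forall>i j. i < j \<and> j < n \<longrightarrow> (\<exists>t\<in>{0..1}. a i = g i t \<and> a j = g j t))
              \<longrightarrow> (\<exists>t\<in>{0..1}. \<forall>i<n. a i = g i t))"
proof (intro conjI allI impI)
  fix a :: "nat \<Rightarrow> real"
  assume "(\<forall>i<n. a i \<in> {0..1}) \<and> (\<forall>i j. i < j \<and> j < n \<longrightarrow> (\<exists>t\<in>{0..1}. a i = g i t \<and> a j = g j t))"
  then show "\<exists>t\<in>{0..1}. \<forall>i<n. a i = g i t" using helly[OF assms] by blast
next
  fix h
  assume H: "tuple n h \<and> (\<forall>i j. i < j \<and> j < n \<longrightarrow> same_type_on {i, j} g h)"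
  have h: "tuple n h" using H by blast
  have pw: "\<And>i j. i < j \<Longrightarrow> j < n \<Longrightarrow> same_type_on {i, j} g h" using H by blast
  have mg: "\<And>i. i < n \<Longrightarrow> g i \<in> M01" using assms unfolding tuple_def by auto
  have mh: "\<And>i. i < n \<Longrightarrow> h i \<in> M01" using h unfolding tuple_def by auto
  show "same_type_on {..<n} g h"
    unfolding same_type_on_def
  proof (intro allI impI)
    fix \<phi> assume \<phi>: "wf_form \<phi> \<and> fv \<phi> \<subseteq> {..<n}"
    show "eval g \<phi> = eval h \<phi>"
    proof (cases "n = 0")
      case True
      then have "fv \<phi> = {}" using \<phi> by auto
      then show ?thesis by (intro eval_local) auto
    next
      case False
      then have n: "n \<ge> 1" by simp
      show ?thesis
      proof (rule same_image_eval[OF n assms h])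
        show "wf_form \<phi>" "fv \<phi> \<subseteq> {..<n}" using \<phi> by auto
        fix t :: real assume t: "t \<in> {0..1}"
        show "\<exists>s\<in>{0..1}. \<forall>i<n. h i t = g i s"
        proof (rule helly[OF assms])
          show "\<forall>i<n. h i t \<in> {0..1}" using mh M01_range t by auto
          show "\<forall>i j. i < j \<and> j < n \<longrightarrow> (\<exists>s\<in>{0..1}. h i t = g i s \<and> h j t = g j s)"
          proof (intro allI impI)
            fix i j assume ij: "i < j \<and> j < n"
            have i: "i < n" and j: "j < n" and ne: "i \<noteq> j" using ij by auto
            have "\<exists>s\<in>{0..1}. g i s = h i t \<and> g j s = h j t"
              by (rule pair_transfer[OF mh[OF i] mh[OF j] mg[OF i] mg[OF j] ne
                    same_type_sym[OF pw] t]) (use ij in auto)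
            then show "\<exists>s\<in>{0..1}. h i t = g i s \<and> h j t = g j s" by metis
          qed
        qed
      qed
    qed
  qed
qed

end
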